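(* Let $G$ be a connected graph on $n\ge 2$ vertices. Then $$\frac{2}{n-1}\le \gamma(G)\le \frac{n}{n-1}.$$ Equality holds in the lower bound if and only if $G$ is isomorphic to the path $P_n$, and equality holds in the upper bound if and only if $G$ is isomorphic to the complete graph $K_n$.
   Context: For a finite simple undirected graph $G$ with $n$ vertices, let $\mathcal{F}=\{x\in\mathbb{R}^{V(G)} : \sum_{v} x_v = 0,\ \|x\|_\infty = 1\}$, for $x\in\mathcal{F}$ let $\gamma_x(G)=\max_{uv\in E(G)}|x_u-x_v|$, and $\gamma(G)=\min_{x\in\mathcal{F}}\gamma_x(G)$. *)

theory Defs
  imports Complex_Main
begin

definition simple_graph :: "'a set \<Rightarrow> ('a \<Rightarrow> 'a \<Rightarrow> bool) \<Rightarrow> bool" where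
  "simple_graph V E \<longleftrightarrow> finite V \<and>
     (\<forall>u v. E u v \<longrightarrow> u \<in> V \<and> v \<in> V) \<and>
     (\<forall>u v. E u v \<longrightarrow> E v u) \<and> (\<forall>u. \<not> E u u)"

definition connected_graph :: "'a set \<Rightarrow> ('a \<Rightarrow> 'a \<Rightarrow> bool) \<Rightarrow> bool" where
  "connected_graph V E \<longleftrightarrow>
     (\<forall>u\<in>V. \<forall>v\<in>V. (\<lambda>a b. a \<in> V \<and> b \<in> V \<and> E a b)\<^sup>*\<^sup>* u v)"

definition edges :: "'a set \<Rightarrow> ('a \<Rightarrow> 'a \<Rightarrow> bool) \<Rightarrow> ('a \<times> 'a) set" where
  "edges V E = {(u, v). u \<in> V \<and> v \<in> V \<and> E u v}"

text \<open>Vectors in R^V are functions vanishing outside V.\<close>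
definition sup_norm :: "'a set \<Rightarrow> ('a \<Rightarrow> real) \<Rightarrow> real" where
  "sup_norm V x = Max ((\<lambda>v. \<bar>x v\<bar>) ` V)"

definition feasible :: "'a set \<Rightarrow> ('a \<Rightarrow> real) set" where
  "feasible V = {x. (\<forall>v. v \<notin> V \<longrightarrow> x v = 0) \<and> (\<Sum>v\<in>V. x v) = 0 \<and> sup_norm V x = 1}"

definition gamma_x :: "'a set \<Rightarrow> ('a \<Rightarrow> 'a \<Rightarrow> bool) \<Rightarrow> ('a \<Rightarrow> real) \<Rightarrow> real" where
  "gamma_x V E x = Max ((\<lambda>(u, v). \<bar>x u - x v\<bar>) ` edges V E)"

text \<open>The paper defines gamma as a minimum; the minimum is attained
  (compactness), so it coincides with the infimum used here.\<close>
definition gamma :: "'a set \<Rightarrow> ('a \<Rightarrow> 'a \<Rightarrow> bool) \<Rightarrow> real" where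
  "gamma V E = Inf (gamma_x V E ` feasible V)"

definition iso_path :: "'a set \<Rightarrow> ('a \<Rightarrow> 'a \<Rightarrow> bool) \<Rightarrow> bool" where
  "iso_path V E \<longleftrightarrow> (\<exists>f. bij_betw f V {0..<card V} \<and>
     (\<forall>u\<in>V. \<forall>v\<in>V. E u v \<longleftrightarrow> (f u + 1 = f v \<or> f v + 1 = f u)))"

definition iso_complete :: "'a set \<Rightarrow> ('a \<Rightarrow> 'a \<Rightarrow> bool) \<Rightarrow> bool" where
  "iso_complete V E \<longleftrightarrow> (\<forall>u\<in>V. \<forall>v\<in>V. E u v \<longleftrightarrow> u \<noteq> v)"

end

theory Submission
  imports Defs
begin

lemma crossing:
  assumes "connected_graph V E" "S \<subseteq> V" "a \<in> S" "b \<in> V" "b \<notin> S"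
  shows "\<exists>p\<in>S. \<exists>q\<in>V-S. E p q"
proof -
  have "(\<lambda>a b. a \<in> V \<and> b \<in> V \<and> E a b)\<^sup>*\<^sup>* a b"
    using assms unfolding connected_graph_def by blast
  then show ?thesis using assms(3,5)
  proof (induction rule: rtranclp_induct)
    case base then show ?case by simp
  next
    case (step y z) then show ?case by (cases "y \<in> S") blast+
  qed
qed

lemma gauss2: "2 * (\<Sum>k<n. k + 1) = n * (n + (1::nat))"
  by (induction n) (auto simp: algebra_simps)

lemma sum_rank:
  fixes r :: "'a \<Rightarrow> nat"
  assumes fin: "finite V" and cV: "card V = n"
    and cards: "\<forall>k<n. k + 1 \<le> card {u\<in>V. r u \<le> k}" and rlt: "\<forall>u\<in>V. r u < n"
  shows "2 * (\<Sum>u\<in>V. r u) \<le> n * (n - 1)"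
    and "\<not> bij_betw r V {0..<n} \<Longrightarrow> 2 * (\<Sum>u\<in>V. r u) + 2 \<le> n * (n - 1)"
proof -
  have r1: "r u = (\<Sum>k<n. if k < r u then 1 else 0)" if "u \<in> V" for u
  proof -
    have "(\<Sum>k<n. if k < r u then 1 else (0::nat)) = card {k\<in>{..<n}. k < r u}"
      by (simp add: sum.inter_filter[symmetric])
    also have "{k\<in>{..<n}. k < r u} = {..<r u}" using rlt that by auto
    finally show ?thesis by simp
  qed
  have c1: "card {u\<in>V. r u \<le> k} = (\<Sum>u\<in>V. if r u \<le> k then 1 else 0)" for k
    using fin by (simp add: sum.inter_filter[symmetric])
  have key: "(\<Sum>u\<in>V. r u) + (\<Sum>k<n. card {u\<in>V. r u \<le> k}) = n * n"
  proof -
    have "(\<Sum>u\<in>V. r u) = (\<Sum>u\<in>V. \<Sum>k<n. if k < r u then 1 else 0)"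
      using r1 by (rule sum.cong[OF refl])
    also have "\<dots> = (\<Sum>k<n. \<Sum>u\<in>V. if k < r u then 1 else 0)" by (rule sum.swap)
    finally have "(\<Sum>u\<in>V. r u) + (\<Sum>k<n. card {u\<in>V. r u \<le> k})
       = (\<Sum>k<n. (\<Sum>u\<in>V. if k < r u then 1 else 0) + (\<Sum>u\<in>V. if r u \<le> k then 1 else 0))"
      by (simp add: c1 sum.distrib)
    also have "\<dots> = (\<Sum>k<n. \<Sum>u\<in>V. (1::nat))"
      by (rule sum.cong[OF refl], subst sum.distrib[symmetric], rule sum.cong[OF refl]) auto
    also have "\<dots> = n * n" using cV by simp
    finally show ?thesis .
  qed
  have low: "(\<Sum>k<n. k + 1) \<le> (\<Sum>k<n. card {u\<in>V. r u \<le> k})"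
    using cards by (intro sum_mono) auto
  show "2 * (\<Sum>u\<in>V. r u) \<le> n * (n - 1)"
    using key low gauss2[of n] by (cases n) (auto simp: algebra_simps)
  assume nb: "\<not> bij_betw r V {0..<n}"
  have "r ` V \<noteq> {0..<n}"
  proof
    assume im: "r ` V = {0..<n}"
    then have "card (r ` V) = card V" using cV by simp
    then have "inj_on r V" using fin eq_card_imp_inj_on by blast
    then show False using nb im by (simp add: bij_betw_def)
  qed
  moreover have "r ` V \<subseteq> {0..<n}" using rlt by auto
  ultimately have "\<not> {0..<n} \<subseteq> r ` V" by blast
  then obtain k0 where k0': "k0 \<in> {0..<n}" "k0 \<notin> r ` V" by blast
  then have k0: "k0 < n" "k0 \<notin> r ` V" by auto
  have "k0 \<noteq> 0"
  proof
    assume "k0 = 0"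
    then have e: "{u\<in>V. r u \<le> k0} = {}" using k0 by auto
    have "k0 + 1 \<le> card {u\<in>V. r u \<le> k0}" using cards k0 by blast
    then show False using e by simp
  qed
  then obtain j where j: "k0 = Suc j" by (cases k0) auto
  have "{u\<in>V. r u \<le> k0} = {u\<in>V. r u \<le> j}" using k0 j by (auto simp: le_Suc_eq image_iff)
  then have "j + 1 < card {u\<in>V. r u \<le> j}" using cards k0 j by fastforce
  then have "(\<Sum>k<n. k + 1) < (\<Sum>k<n. card {u\<in>V. r u \<le> k})"
    using cards j k0 by (intro sum_strict_mono_ex1) auto
  then show "2 * (\<Sum>u\<in>V. r u) + 2 \<le> n * (n - 1)"
    using key gauss2[of n] by (cases n) (auto simp: algebra_simps)
qed

lemma rank_path:
  fixes r :: "'a \<Rightarrow> nat"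
  assumes sg: "simple_graph V E" and conn: "connected_graph V E"
    and bij: "bij_betw r V {0..<n}"
    and step: "\<forall>a\<in>V. \<forall>b\<in>V. E a b \<longrightarrow> r b \<le> r a + 1"
  shows "iso_path V E"
proof -
  have cV: "card V = n" using bij_betw_same_card[OF bij] by simp
  have inj: "inj_on r V" using bij by (simp add: bij_betw_def)
  have sym: "E a b \<Longrightarrow> E b a" for a b using sg by (simp add: simple_graph_def)
  have irr: "\<not> E a a" for a using sg by (simp add: simple_graph_def)
  have adj: "E u v" if uv: "u \<in> V" "v \<in> V" "r v = r u + 1" for u v
  proof -
    let ?S = "{p\<in>V. r p \<le> r u}"
    obtain p q where pq: "p \<in> ?S" "q \<in> V - ?S" "E p q"
      using crossing[OF conn, of ?S u v] uv by auto
    then have rq: "r q = r u + 1" using step by force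
    then have "q = v" using inj uv pq by (metis DiffD1 inj_onD)
    moreover have "r p = r u" using rq pq step by force
    then have "p = u" using inj uv pq by (metis (no_types, lifting) inj_onD mem_Collect_eq)
    ultimately show ?thesis using pq by simp
  qed
  show ?thesis unfolding iso_path_def
  proof (intro exI[of _ r] conjI ballI)
    show "bij_betw r V {0..<card V}" using bij cV by simp
    fix u v assume uv: "u \<in> V" "v \<in> V"
    show "E u v = (r u + 1 = r v \<or> r v + 1 = r u)"
    proof
      assume e: "E u v"
      then have "u \<noteq> v" using irr by auto
      then have "r u \<noteq> r v" using inj uv by (meson inj_onD)
      moreover have "r v \<le> r u + 1" "r u \<le> r v + 1" using step uv e sym by auto
      ultimately show "r u + 1 = r v \<or> r v + 1 = r u" by arith
    next
      assume "r u + 1 = r v \<or> r v + 1 = r u"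
      then show "E u v" using adj[of u v] adj[of v u] uv sym by auto
    qed
  qed
qed

lemma fin_edges: "simple_graph V E \<Longrightarrow> finite (edges V E)"
proof -
  assume sg: "simple_graph V E"
  have "edges V E \<subseteq> V \<times> V" by (auto simp: edges_def)
  then show ?thesis using sg by (meson finite_SigmaI finite_subset simple_graph_def)
qed

lemma edges_ne:
  assumes "connected_graph V E" "card V \<ge> 2"
  shows "edges V E \<noteq> {}"
proof -
  have fin: "finite V" using assms(2) card.infinite by fastforce
  obtain v where v: "v \<in> V" using assms(2) by fastforce
  have "card (V - {v}) \<ge> 1" using assms(2) v fin by simp
  then have "V - {v} \<noteq> {}" by (metis card.empty le_zero_eq one_neq_zero)
  then obtain w where w: "w \<in> V" "w \<noteq> v" by blast
  obtain p q where "p \<in> {v}" "q \<in> V - {v}" "E p q"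
    using crossing[OF assms(1), of "{v}" v w] v w by auto
  then have "(p, q) \<in> edges V E" using v by (auto simp: edges_def)
  then show ?thesis by auto
qed

lemma edge_le:
  assumes "simple_graph V E" "(p, q) \<in> edges V E"
  shows "\<bar>x p - x q\<bar> \<le> gamma_x V E x"
  unfolding gamma_x_def using assms fin_edges[OF assms(1)]
  by (intro Max_ge) force+

lemma gx_nonneg:
  assumes "simple_graph V E" "connected_graph V E" "card V \<ge> 2"
  shows "0 \<le> gamma_x V E x"
proof -
  obtain p q where "(p, q) \<in> edges V E" using edges_ne[OF assms(2,3)] by auto
  then show ?thesis using edge_le[OF assms(1)] abs_ge_zero order_trans by blast
qed

lemma gx_le:
  assumes "simple_graph V E" "connected_graph V E" "card V \<ge> 2"
    and "\<And>p q. p \<in> V \<Longrightarrow> q \<in> V \<Longrightarrow> E p q \<Longrightarrow> \<bar>x p - x q\<bar> \<le> c"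
  shows "gamma_x V E x \<le> c"
  unfolding gamma_x_def using assms fin_edges[OF assms(1)] edges_ne[OF assms(2,3)]
  by (subst Max_le_iff) (auto simp: edges_def)

lemma gx_less:
  assumes "simple_graph V E" "connected_graph V E" "card V \<ge> 2"
    and "\<And>p q. p \<in> V \<Longrightarrow> q \<in> V \<Longrightarrow> E p q \<Longrightarrow> \<bar>x p - x q\<bar> < c"
  shows "gamma_x V E x < c"
  unfolding gamma_x_def using assms fin_edges[OF assms(1)] edges_ne[OF assms(2,3)]
  by (subst Max_less_iff) (auto simp: edges_def)

lemma gx_neg: "gamma_x V E (\<lambda>u. - x u) = gamma_x V E x"
  unfolding gamma_x_def by (rule arg_cong[where f=Max], rule image_cong) (auto simp: abs_minus_commute)

lemma feas_neg: "x \<in> feasible V \<Longrightarrow> (\<lambda>u. - x u) \<in> feasible V"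
  unfolding feasible_def sup_norm_def by (simp add: sum_negf)

lemma lower_core:
  assumes sg: "simple_graph V E" and conn: "connected_graph V E" and cV: "card V = n"
    and n2: "n \<ge> 2" and xf: "x \<in> feasible V" and vV: "v \<in> V" and xv: "x v = 1"
  shows "2 / (real n - 1) \<le> gamma_x V E x \<and>
    (\<not> iso_path V E \<longrightarrow> 0 < real n * (real n - 1) / 2 - 1 \<and>
       real n / (real n * (real n - 1) / 2 - 1) \<le> gamma_x V E x)"
proof -
  define d where "d = gamma_x V E x"
  have fin: "finite V" using cV n2 card.infinite by fastforce
  have d0: "0 \<le> d" unfolding d_def using gx_nonneg sg conn cV n2 by blast
  have el: "x a - d \<le> x b" if "a \<in> V" "b \<in> V" "E a b" for a b
  proof -
    have "(a, b) \<in> edges V E" using that by (simp add: edges_def)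
    then have "\<bar>x a - x b\<bar> \<le> d" unfolding d_def by (rule edge_le[OF sg])
    then show ?thesis by simp
  qed
  define S where "S k = {u\<in>V. 1 - real k * d \<le> x u}" for k
  have SV: "S k \<subseteq> V" for k by (auto simp: S_def)
  have Smono: "S k \<subseteq> S k'" if "k \<le> k'" for k k'
  proof -
    have "real k * d \<le> real k' * d" using that d0 by (simp add: mult_right_mono)
    then show ?thesis by (auto simp: S_def)
  qed
  have vS: "v \<in> S k" for k
  proof -
    have "v \<in> S 0" using vV xv by (simp add: S_def)
    then show ?thesis using Smono[of 0 k] by auto
  qed
  have Scard: "min n (k + 1) \<le> card (S k)" for k
  proof (induction k)
    case 0
    have "card (S 0) > 0" using vS[of 0] SV[of 0] fin by (metis card_gt_0_iff empty_iff finite_subset)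
    then show ?case by simp
  next
    case (Suc k)
    show ?case
    proof (cases "S k = V")
      case True
      then have "S (Suc k) = V" using Smono[of k "Suc k"] SV[of "Suc k"] by auto
      then show ?thesis using cV by simp
    next
      case False
      then obtain b where b: "b \<in> V" "b \<notin> S k" using SV[of k] by auto
      obtain p q where pq: "p \<in> S k" "q \<in> V - S k" "E p q"
        using crossing[OF conn SV[of k] vS[of k] b] by auto
      have "x q \<ge> 1 - real (Suc k) * d"
        using el[of p q] pq SV[of k] by (auto simp: S_def algebra_simps)
      then have "q \<in> S (Suc k)" using pq by (auto simp: S_def)
      then have "insert q (S k) \<subseteq> S (Suc k)" using Smono[of k "Suc k"] by auto
      then have "card (insert q (S k)) \<le> card (S (Suc k))"
        using fin SV[of "Suc k"] by (meson card_mono finite_subset)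
      moreover have "card (insert q (S k)) = card (S k) + 1"
        using pq fin SV[of k] by (simp add: finite_subset)
      ultimately show ?thesis using Suc.IH by simp
    qed
  qed
  have SnV: "S (n - 1) = V"
  proof (rule card_subset_eq[OF fin SV])
    show "card (S (n - 1)) = card V"
      using Scard[of "n - 1"] n2 cV card_mono[OF fin SV[of "n - 1"]] by simp
  qed
  define r where "r u = (LEAST k. u \<in> S k)" for u
  have rS: "u \<in> S (r u)" if "u \<in> V" for u
    unfolding r_def using SnV that by (metis LeastI)
  have rle: "r u \<le> k" if "u \<in> S k" for u k
    unfolding r_def using that by (rule Least_le)
  have rset: "{u\<in>V. r u \<le> k} = S k" for k
    using rS rle Smono SV by blast
  have cards: "\<forall>k<n. k + 1 \<le> card {u\<in>V. r u \<le> k}"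
  proof (intro allI impI)
    fix k assume "k < n"
    then have "min n (k + 1) = k + 1" by simp
    then show "k + 1 \<le> card {u\<in>V. r u \<le> k}" using Scard[of k] rset[of k] by simp
  qed
  have rlt: "\<forall>u\<in>V. r u < n"
  proof
    fix u assume "u \<in> V"
    then have "r u \<le> n - 1" using rle SnV by blast
    then show "r u < n" using n2 by linarith
  qed
  have step: "\<forall>a\<in>V. \<forall>b\<in>V. E a b \<longrightarrow> r b \<le> r a + 1"
  proof (intro ballI impI)
    fix a b assume ab: "a \<in> V" "b \<in> V" "E a b"
    have "1 - real (r a) * d \<le> x a" using rS[OF ab(1)] by (simp add: S_def)
    then have "1 - real (r a + 1) * d \<le> x b" using el[OF ab] by (simp add: algebra_simps)
    then have "b \<in> S (r a + 1)" using ab by (simp add: S_def)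
    then show "r b \<le> r a + 1" by (rule rle)
  qed
  have xr: "1 - real (r u) * d \<le> x u" if "u \<in> V" for u
    using rS[OF that] by (simp add: S_def)
  have sumx: "(\<Sum>u\<in>V. x u) = 0" using xf by (simp add: feasible_def)
  have "(\<Sum>u\<in>V. 1 - real (r u) * d) \<le> (\<Sum>u\<in>V. x u)"
    using xr by (rule sum_mono)
  then have "real n - (\<Sum>u\<in>V. real (r u)) * d \<le> 0"
    using sumx cV by (simp add: sum_subtractf sum_distrib_right)
  then have nds: "real n \<le> d * real (\<Sum>u\<in>V. r u)" by (simp add: algebra_simps)
  define s where "s = real (\<Sum>u\<in>V. r u)"
  have nn: "real (n * (n - 1)) = real n * (real n - 1)" using n2 by (simp add: of_nat_diff)
  have s2n: "2 * (\<Sum>u\<in>V. r u) \<le> n * (n - 1)" by (rule sum_rank(1)[OF fin cV cards rlt])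
  have "real (2 * (\<Sum>u\<in>V. r u)) \<le> real (n * (n - 1))" using s2n by (simp only: of_nat_le_iff)
  then have "real (2 * (\<Sum>u\<in>V. r u)) \<le> real n * (real n - 1)" by (simp only: nn)
  then have s2: "2 * s \<le> real n * (real n - 1)" unfolding s_def by simp
  have nds': "real n \<le> d * s" using nds s_def by simp
  have spos: "0 < s"
  proof (rule ccontr)
    assume "\<not> 0 < s"
    moreover have "0 \<le> s" unfolding s_def by (rule of_nat_0_le_iff)
    ultimately have "s = 0" by linarith
    then show False using nds' n2 by simp
  qed
  have n1: "real n - 1 > 0" using n2 by simp
  have "2 / (real n - 1) * s \<le> 2 / (real n - 1) * (real n * (real n - 1) / 2)"
    using s2 n1 by (intro mult_left_mono) auto
  also have "\<dots> = real n" using n1 by simp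
  finally have "2 / (real n - 1) * s \<le> real n" .
  then have "2 / (real n - 1) * s \<le> d * s" using nds' by linarith
  then have low: "2 / (real n - 1) \<le> d" using spos by (meson mult_le_cancel_right_pos)
  have high: "0 < real n * (real n - 1) / 2 - 1 \<and> real n / (real n * (real n - 1) / 2 - 1) \<le> d"
    if np: "\<not> iso_path V E"
  proof -
    have "\<not> bij_betw r V {0..<n}" using rank_path[OF sg conn _ step] np by blast
    then have "2 * (\<Sum>u\<in>V. r u) + 2 \<le> n * (n - 1)" using sum_rank(2)[OF fin cV cards rlt] by blast
    then have "real (2 * (\<Sum>u\<in>V. r u) + 2) \<le> real (n * (n - 1))" by (simp only: of_nat_le_iff)
    then have "real (2 * (\<Sum>u\<in>V. r u) + 2) \<le> real n * (real n - 1)" by (simp only: nn)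
    then have "2 * s + 2 \<le> real n * (real n - 1)" unfolding s_def by simp
    then have sM: "s \<le> real n * (real n - 1) / 2 - 1" by simp
    then have Mpos: "0 < real n * (real n - 1) / 2 - 1" using spos by linarith
    have "real n \<le> d * (real n * (real n - 1) / 2 - 1)"
      using nds' mult_left_mono[OF sM d0] by linarith
    then show ?thesis using Mpos by (simp add: pos_divide_le_eq)
  qed
  show ?thesis using low high d_def by blast
qed

lemma complete_core:
  assumes sg: "simple_graph V E" and conn: "connected_graph V E" and cV: "card V = n"
    and n2: "n \<ge> 2" and xf: "x \<in> feasible V" and vV: "v \<in> V" and xv: "x v = 1"
    and comp: "iso_complete V E"
  shows "real n / (real n - 1) \<le> gamma_x V E x"
proof -
  have fin: "finite V" using cV n2 card.infinite by fastforce
  have sumx: "(\<Sum>u\<in>V. x u) = 0" using xf by (simp add: feasible_def)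
  have s1: "(\<Sum>u\<in>V-{v}. x u) = -1" using sum.remove[OF fin vV, of x] sumx xv by simp
  have cr: "card (V - {v}) = n - 1" using cV vV fin by simp
  have n1: "real n - 1 > 0" using n2 by simp
  obtain w where w: "w \<in> V - {v}" "x w \<le> -1 / (real n - 1)"
  proof (rule ccontr)
    assume "\<not> thesis"
    then have all: "\<forall>w\<in>V-{v}. -1 / (real n - 1) < x w" using that by force
    have ne: "V - {v} \<noteq> {}" using cr n2 by (metis card.empty diff_is_0_eq not_numeral_le_zero zero_diff le_zero_eq One_nat_def Suc_1 Suc_diff_le diff_Suc_1 nat.simps(3))
    have "(\<Sum>u\<in>V-{v}. -1 / (real n - 1)) < (\<Sum>u\<in>V-{v}. x u)"
      using fin ne all by (intro sum_strict_mono) auto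
    moreover have "(\<Sum>u\<in>V-{v}. -1 / (real n - 1)) = -1"
      using cr n1 n2 by (simp add: of_nat_diff)
    ultimately show False using s1 by simp
  qed
  have "E v w" using comp w vV unfolding iso_complete_def by auto
  then have "(v, w) \<in> edges V E" using vV w by (simp add: edges_def)
  then have "\<bar>x v - x w\<bar> \<le> gamma_x V E x" by (rule edge_le[OF sg])
  moreover have "real n / (real n - 1) = 1 + 1 / (real n - 1)" using n1 by (simp add: field_simps)
  ultimately show ?thesis using w xv by simp
qed

lemma sum_real_k: "2 * (\<Sum>k<n. real k) = real n * (real n - 1)"
  by (induction n) (auto simp: algebra_simps)

lemma exists_unit:
  assumes "x \<in> feasible V" "finite V" "V \<noteq> {}"
  shows "\<exists>v\<in>V. \<bar>x v\<bar> = 1"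
proof -
  have "Max ((\<lambda>v. \<bar>x v\<bar>) ` V) = 1" using assms(1) by (simp add: feasible_def sup_norm_def)
  moreover have "Max ((\<lambda>v. \<bar>x v\<bar>) ` V) \<in> (\<lambda>v. \<bar>x v\<bar>) ` V" using assms(2,3) by (intro Max_in) auto
  ultimately show ?thesis by auto
qed

lemma all_lower:
  assumes sg: "simple_graph V E" and conn: "connected_graph V E" and cV: "card V = n"
    and n2: "n \<ge> 2" and xf: "x \<in> feasible V"
  shows "2 / (real n - 1) \<le> gamma_x V E x \<and>
    (\<not> iso_path V E \<longrightarrow> 0 < real n * (real n - 1) / 2 - 1 \<and>
       real n / (real n * (real n - 1) / 2 - 1) \<le> gamma_x V E x) \<and>
    (iso_complete V E \<longrightarrow> real n / (real n - 1) \<le> gamma_x V E x)"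
proof -
  have fin: "finite V" using cV n2 card.infinite by fastforce
  have ne: "V \<noteq> {}" using cV n2 by auto
  obtain v where v: "v \<in> V" "\<bar>x v\<bar> = 1" using exists_unit[OF xf fin ne] by blast
  show ?thesis
  proof (cases "x v = 1")
    case True
    then show ?thesis using lower_core[OF sg conn cV n2 xf v(1)] complete_core[OF sg conn cV n2 xf v(1)] by blast
  next
    case False
    then have "(\<lambda>u. - x u) v = 1" using v by auto
    then show ?thesis
      using lower_core[OF sg conn cV n2 feas_neg[OF xf] v(1)]
        complete_core[OF sg conn cV n2 feas_neg[OF xf] v(1)] gx_neg[of V E x] by simp
  qed
qed

lemma Max_eq1:
  assumes "finite V" "v \<in> V" "\<bar>x v\<bar> = 1" "\<forall>u\<in>V. \<bar>x u\<bar> \<le> 1"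
  shows "sup_norm V x = 1"
  unfolding sup_norm_def using assms by (intro Max_eqI) auto

theorem theorem4p7:
  fixes V :: "'a set" and E :: "'a \<Rightarrow> 'a \<Rightarrow> bool" and n :: nat
  assumes "simple_graph V E" and "connected_graph V E"
    and "n = card V" and "n \<ge> 2"
  shows "2 / (real n - 1) \<le> gamma V E \<and> gamma V E \<le> real n / (real n - 1)
    \<and> (gamma V E = 2 / (real n - 1) \<longleftrightarrow> iso_path V E)
    \<and> (gamma V E = real n / (real n - 1) \<longleftrightarrow> iso_complete V E)"
proof -
  note sg = assms(1) and conn = assms(2) and n2 = assms(4)
  have cV: "card V = n" using assms(3) by simp
  have cV2: "card V \<ge> 2" using cV n2 by simp
  have fin: "finite V" using cV n2 card.infinite by fastforce
  have n1: "real n - 1 > 0" using n2 by simp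
  have irr: "\<not> E a a" for a using sg by (simp add: simple_graph_def)
  have sym: "E a b \<Longrightarrow> E b a" for a b using sg by (simp add: simple_graph_def)
  let ?F = "feasible V"
  have bdd: "bdd_below (gamma_x V E ` ?F)"
    using gx_nonneg[OF sg conn cV2] by (intro bdd_belowI[of _ 0]) auto
  have gup: "gamma V E \<le> gamma_x V E x" if "x \<in> ?F" for x
    unfolding gamma_def using bdd that by (intro cInf_lower) auto
  have AL: "\<And>x. x \<in> ?F \<Longrightarrow> 2 / (real n - 1) \<le> gamma_x V E x \<and>
    (\<not> iso_path V E \<longrightarrow> 0 < real n * (real n - 1) / 2 - 1 \<and>
       real n / (real n * (real n - 1) / 2 - 1) \<le> gamma_x V E x) \<and>
    (iso_complete V E \<longrightarrow> real n / (real n - 1) \<le> gamma_x V E x)"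
    using all_lower[OF sg conn cV n2] by blast
  obtain v0 where v0: "v0 \<in> V" using cV n2 by fastforce
  define x0 where "x0 u = (if u = v0 then 1 else if u \<in> V then - 1 / (real n - 1) else 0)" for u
  have x0F: "x0 \<in> ?F"
  proof -
    have "(\<Sum>u\<in>V. x0 u) = x0 v0 + (\<Sum>u\<in>V-{v0}. x0 u)" using sum.remove[OF fin v0] by blast
    also have "(\<Sum>u\<in>V-{v0}. x0 u) = (\<Sum>u\<in>V-{v0}. - 1 / (real n - 1))"
      by (rule sum.cong) (auto simp: x0_def)
    also have "\<dots> = -1" using cV v0 fin n1 n2 by (simp add: of_nat_diff)
    finally have "(\<Sum>u\<in>V. x0 u) = 0" by (simp add: x0_def)
    moreover have "sup_norm V x0 = 1"
    proof (rule Max_eq1[OF fin v0])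
      show "\<bar>x0 v0\<bar> = 1" by (simp add: x0_def)
      have "1 / (real n - 1) \<le> 1" using n2 by simp
      then show "\<forall>u\<in>V. \<bar>x0 u\<bar> \<le> 1" using n1 by (auto simp: x0_def abs_of_pos)
    qed
    ultimately show ?thesis using v0 by (auto simp: feasible_def x0_def)
  qed
  have FNE: "?F \<noteq> {}" using x0F by auto
  have glow: "c \<le> gamma V E" if "\<And>x. x \<in> ?F \<Longrightarrow> c \<le> gamma_x V E x" for c
    unfolding gamma_def using FNE that by (intro cInf_greatest) auto
  have eqn: "real n / (real n - 1) = 1 + 1 / (real n - 1)" using n1 by (simp add: field_simps)
  have x0le: "gamma_x V E x0 \<le> real n / (real n - 1)"
  proof (rule gx_le[OF sg conn cV2])
    fix p q assume pq: "p \<in> V" "q \<in> V" "E p q"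
    then have "p \<noteq> q" using irr by auto
    have h: "0 < 1 / (real n - 1)" using n1 by simp
    have "x0 p - x0 q = 1 + 1 / (real n - 1) \<or> x0 p - x0 q = - (1 + 1 / (real n - 1)) \<or> x0 p - x0 q = 0"
      using pq \<open>p \<noteq> q\<close> by (auto simp: x0_def)
    then show "\<bar>x0 p - x0 q\<bar> \<le> real n / (real n - 1)"
      using h eqn by arith
  qed
  have L1: "2 / (real n - 1) \<le> gamma V E" using AL glow by blast
  have L2: "gamma V E \<le> real n / (real n - 1)" using gup[OF x0F] x0le by linarith
  have L3: "gamma V E = 2 / (real n - 1) \<longleftrightarrow> iso_path V E"
  proof
    assume g: "gamma V E = 2 / (real n - 1)"
    show "iso_path V E"
    proof (rule ccontr)
      assume np: "\<not> iso_path V E"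
      define M where "M = real n * (real n - 1) / 2 - 1"
      have Mpos: "0 < M" using AL[OF x0F] np M_def by blast
      have "real n / M \<le> gamma V E" using AL np M_def by (intro glow) blast
      moreover have "2 / (real n - 1) < real n / M"
      proof -
        have "2 / (real n - 1) = real n / (M + 1)" using n1 by (simp add: M_def field_simps)
        also have "\<dots> < real n / M" using Mpos n2 by (intro divide_strict_left_mono) auto
        finally show ?thesis .
      qed
      ultimately show False using g by simp
    qed
  next
    assume "iso_path V E"
    then obtain f where f: "bij_betw f V {0..<card V}"
      and fe: "\<forall>u\<in>V. \<forall>v\<in>V. E u v \<longleftrightarrow> (f u + 1 = f v \<or> f v + 1 = f u)"
      unfolding iso_path_def by blast
    have fn: "bij_betw f V {0..<n}" using f cV by simp
    define g where "g k = -1 + 2 * real k / (real n - 1)" for k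
    define xp where "xp u = (if u \<in> V then g (f u) else 0)" for u
    have xpF: "xp \<in> ?F"
    proof -
      have "(\<Sum>u\<in>V. xp u) = (\<Sum>u\<in>V. g (f u))" by (rule sum.cong) (auto simp: xp_def)
      also have "\<dots> = (\<Sum>k\<in>{0..<n}. g k)" by (rule sum.reindex_bij_betw[OF fn])
      also have "\<dots> = - real n + (2 * (\<Sum>k<n. real k)) / (real n - 1)"
        by (simp add: g_def sum_subtractf sum_divide_distrib sum_distrib_left atLeast0LessThan)
      also have "\<dots> = 0" using n1 by (simp add: sum_real_k)
      finally have s0: "(\<Sum>u\<in>V. xp u) = 0" .
      have "0 \<in> f ` V" using bij_betw_imp_surj_on[OF fn] n2 by auto
      then obtain u0 where u0: "u0 \<in> V" "f u0 = 0" by auto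
      have "sup_norm V xp = 1"
      proof (rule Max_eq1[OF fin u0(1)])
        show "\<bar>xp u0\<bar> = 1" using u0 by (simp add: xp_def g_def)
        show "\<forall>u\<in>V. \<bar>xp u\<bar> \<le> 1"
        proof
          fix u assume uV: "u \<in> V"
          then have "f u < n" using bij_betw_apply[OF fn] by auto
          then have "real (f u) \<le> real n - 1" by linarith
          then have "2 * real (f u) / (real n - 1) \<le> 2" using n1 by (simp add: divide_le_eq)
          moreover have "0 \<le> 2 * real (f u) / (real n - 1)" using n1 by simp
          ultimately show "\<bar>xp u\<bar> \<le> 1" using uV by (simp add: xp_def g_def)
        qed
      qed
      then show ?thesis using s0 by (simp add: feasible_def xp_def)
    qed
    have "gamma_x V E xp \<le> 2 / (real n - 1)"
    proof (rule gx_le[OF sg conn cV2])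
      fix p q assume pq: "p \<in> V" "q \<in> V" "E p q"
      then have "f p + 1 = f q \<or> f q + 1 = f p" using fe by blast
      then have t1: "real (f p) - real (f q) = -1 \<or> real (f p) - real (f q) = 1" by auto
      define t where "t = real (f p) - real (f q)"
      have t2: "t = -1 \<or> t = 1" using t1 t_def by simp
      have "xp p - xp q = 2 * t / (real n - 1)"
        using pq n1 unfolding t_def by (simp add: xp_def g_def diff_divide_distrib right_diff_distrib)
      then have "xp p - xp q = 2 / (real n - 1) \<or> xp p - xp q = - (2 / (real n - 1))"
        using t2 by (elim disjE) simp_all
      moreover have "0 < 2 / (real n - 1)" using n1 by simp
      ultimately show "\<bar>xp p - xp q\<bar> \<le> 2 / (real n - 1)" by arith
    qed
    then show "gamma V E = 2 / (real n - 1)" using gup[OF xpF] L1 by linarith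
  qed
  have L4: "gamma V E = real n / (real n - 1) \<longleftrightarrow> iso_complete V E"
  proof
    assume g: "gamma V E = real n / (real n - 1)"
    show "iso_complete V E"
    proof (rule ccontr)
      assume nc: "\<not> iso_complete V E"
      then obtain u w where uw: "u \<in> V" "w \<in> V" "u \<noteq> w" "\<not> E u w"
        unfolding iso_complete_def using irr by blast
      define m where "m = real n - 1"
      have m1: "m \<ge> 1" using n2 m_def by simp
      have mm: "0 < m * m" using m1 by simp
      define a where "a = - (2 * m - 1) / (m * m)"
      define b where "b = - (m - 1) / (m * m)"
      define x1 where "x1 p = (if p = u then 1 else if p = w then a else if p \<in> V then b else 0)" for p
      have sq: "2 * m - 1 \<le> m * m"
      proof -
        have "0 \<le> (m - 1) * (m - 1)" by simp
        moreover have "(m - 1) * (m - 1) = m * m - 2 * m + 1" by (simp add: algebra_simps)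
        ultimately show ?thesis by linarith
      qed
      have a_le: "\<bar>a\<bar> \<le> 1"
      proof -
        have "(2 * m - 1) / (m * m) \<le> 1" using sq mm by (simp add: divide_le_eq_1_pos)
        moreover have "0 \<le> (2 * m - 1) / (m * m)" using m1 mm by simp
        moreover have "\<bar>a\<bar> = \<bar>(2 * m - 1) / (m * m)\<bar>"
          unfolding a_def by (simp only: minus_divide_left[symmetric] abs_minus_cancel)
        ultimately show ?thesis by simp
      qed
      have b0: "0 \<le> (m - 1) / (m * m)" using m1 mm by simp
      have b_le: "\<bar>b\<bar> \<le> 1"
      proof -
        have "(m - 1) / (m * m) \<le> 1" using sq mm m1 by (simp add: divide_le_eq_1_pos)
        moreover have "\<bar>b\<bar> = \<bar>(m - 1) / (m * m)\<bar>"
          unfolding b_def by (simp only: minus_divide_left[symmetric] abs_minus_cancel)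
        ultimately show ?thesis using b0 by simp
      qed
      have x1F: "x1 \<in> ?F"
      proof -
        have f1: "finite (V - {u})" using fin by simp
        have wV: "w \<in> V - {u}" using uw by simp
        have "(\<Sum>p\<in>V. x1 p) = x1 u + (\<Sum>p\<in>V-{u}. x1 p)" using sum.remove[OF fin uw(1)] by blast
        also have "(\<Sum>p\<in>V-{u}. x1 p) = x1 w + (\<Sum>p\<in>V-{u}-{w}. x1 p)"
          using sum.remove[OF f1 wV] by blast
        also have "(\<Sum>p\<in>V-{u}-{w}. x1 p) = (\<Sum>p\<in>V-{u}-{w}. b)"
          by (rule sum.cong) (auto simp: x1_def)
        also have "\<dots> = real (n - 2) * b"
        proof -
          have "card (V - {u} - {w}) = n - 2" using fin uw cV by (simp add: numeral_2_eq_2)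
          then show ?thesis by simp
        qed
        also have "real (n - 2) = m - 1" using n2 m_def by (simp add: of_nat_diff)
        finally have "(\<Sum>p\<in>V. x1 p) = 1 + a + (m - 1) * b" using uw by (simp add: x1_def)
        also have "\<dots> = 0"
        proof -
          have e1: "a * (m * m) = - (2 * m - 1)" unfolding a_def using mm m1 by simp
          have e2: "b * (m * m) = - (m - 1)" unfolding b_def using mm m1 by simp
          have "(1 + a + (m - 1) * b) * (m * m) = m * m + a * (m * m) + (m - 1) * (b * (m * m))"
            by (simp add: algebra_simps)
          also have "\<dots> = 0" unfolding e1 e2 by (simp add: algebra_simps)
          finally show ?thesis using mm m1 by simp
        qed
        finally have s0: "(\<Sum>p\<in>V. x1 p) = 0" .
        have "sup_norm V x1 = 1"
          using Max_eq1[OF fin uw(1), of x1] a_le b_le by (simp add: x1_def)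
        then show ?thesis using s0 uw by (simp add: feasible_def x1_def)
      qed
      have im: "0 < 1 / m" using m1 by simp
      have eqm: "real n / (real n - 1) = 1 + 1 / m" using n1 m_def by (simp add: field_simps)
      have ab: "a - b = - (1 / m)" unfolding a_def b_def using mm m1 by (simp add: field_simps)
      have bl: "(m - 1) / (m * m) < 1 / m"
      proof -
        have "(m - 1) / (m * m) < m / (m * m)" using mm by (intro divide_strict_right_mono) auto
        also have "m / (m * m) = 1 / m" using m1 by simp
        finally show ?thesis .
      qed
      have "gamma_x V E x1 < real n / (real n - 1)"
      proof (rule gx_less[OF sg conn cV2])
        fix p q assume pq: "p \<in> V" "q \<in> V" "E p q"
        then have pq2: "p \<noteq> q" using irr by auto
        have nuw: "\<not> (p = u \<and> q = w) \<and> \<not> (p = w \<and> q = u)" using pq uw sym by blast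
        have "x1 p - x1 q = 1 - b \<or> x1 p - x1 q = - (1 - b) \<or> x1 p - x1 q = a - b
          \<or> x1 p - x1 q = - (a - b) \<or> x1 p - x1 q = 0"
          using pq pq2 nuw by (auto simp: x1_def)
        moreover have "1 - b = 1 + (m - 1) / (m * m)"
        proof -
          have bb: "b = - ((m - 1) / (m * m))" unfolding b_def by (simp only: minus_divide_left)
          show ?thesis by (subst bb) simp
        qed
        ultimately show "\<bar>x1 p - x1 q\<bar> < real n / (real n - 1)"
          using eqm ab bl b0 im by arith
      qed
      then show False using gup[OF x1F] g by simp
    qed
  next
    assume "iso_complete V E"
    then have "real n / (real n - 1) \<le> gamma V E" using AL by (intro glow) blast
    then show "gamma V E = real n / (real n - 1)" using L2 by linarith
  qed
  show ?thesis using L1 L2 L3 L4 by blast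
qed

end
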